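(* Let $q$ be a prime power and let $C_2\subsetneq C_1\subseteq\mathbf{F}_q^n$ be $\mathbf{F}_q$-linear codes with $\dim C_1-\dim C_2=L$. Fix an $\mathbf{F}_q$-linear isomorphism $f:\mathbf{F}_q^L\to C_1/C_2$ (so each $f(\vec{s})$ is a coset of $C_2$ in $C_1$, viewed as a subset of $C_1$). Consider the quantum ramp secret sharing scheme which encodes each basis state $|\vec{s}\rangle\in\bigotimes_{i=1}^L\mathcal{G}_i$, $\vec{s}\in\mathbf{F}_q^L$, to \[ \frac{1}{\sqrt{|C_2|}}\sum_{\vec{x}\in f(\vec{s})}|\vec{x}\rangle\in\bigotimes_{j=1}^n\mathcal{H}_j, \] extended complex-linearly, with $\mathcal{H}_j$ being the $j$-th share. Let $I\subseteq\{1,\ldots,L\}$, $\overline{I}=\{1,\ldots,L\}\setminus I$, $J\subseteq\{1,\ldots,n\}$, $\overline{J}=\{1,\ldots,n\}\setminus J$, and define the codes in $\mathbf{F}_q^{n+|\overline{I}|}$ \[ C'_1=\{(\vec{x},P_{\overline{I}}(\vec{s})) : \vec{s}\in\mathbf{F}_q^L,\ \vec{x}\in f(\vec{s})\},\qquad C'_2=\{(\vec{x},P_{\overline{I}}(\vec{s})) : \vec{s}\in\mathbf{F}_q^L,\ P_I(\vec{s})=\vec{0},\ \vec{x}\in f(\vec{s})\}. \] Then the scheme is strongly secure with respect to $I$ and $J$ if and only if \[ \dim P_J(C'_1)-\dim P_J(C'_2)=0 \] and \[ \dim P_{\overline{J}\cup\{n+1,\ldots,n+|\overline{I}|\}}(C'_1)-\dim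 P_{\overline{J}\cup\{n+1,\ldots,n+|\overline{I}|\}}(C'_2)=|I|. \]
   Context: All $\mathcal{G}_i$ ($i=1,\ldots,L$) and $\mathcal{H}_j$ ($j=1,\ldots,n$) are $q$-dimensional complex Hilbert spaces with orthonormal basis $\{|a\rangle : a\in\mathbf{F}_q\}$; for $\vec{x}\in\mathbf{F}_q^n$, $|\vec{x}\rangle=|x_1\rangle\otimes\cdots\otimes|x_n\rangle$. For an index set $K$ and a vector $\vec{v}$, $P_K(\vec{v})=(v_k)_{k\in K}$ is the projection (puncturing) onto the coordinates in $K$; for a code $C$, $P_K(C)=\{P_K(\vec{v}):\vec{v}\in C\}$. In $C'_1,C'_2$ the first $n$ coordinates are those of $\vec{x}$ and coordinates $n+1,\ldots,n+|\overline{I}|$ are those of $P_{\overline{I}}(\vec{s})$. For $I\subseteq\{1,\ldots,L\}$ let $\mathcal{G}_I=\bigotimes_{i\in I}\mathcal{G}_i$ and $\mathcal{G}_{\overline{I}}=\bigotimes_{i\in\overline{I}}\mathcal{G}_i$. Definition (strong security): the scheme is strongly secure with respect to $I$ and $J$ if the quantum state $\sigma_J$ of the shares in $\bigotimes_{j\in J}\mathcal{H}_j$ (the reduced state of the encoded secret) is always the same state regardless of $\rho_I$, when the whole quantum secret is in the state $\rho_I\otimes\rho_{\overline{I},\mathrm{mix}}$, where $\rho_I$ is an arbitrary state on $\mathcal{G}_I$ and $\rho_{\overline{I},\mathrm{mix}}$ is the fully mixed state on $\mathcal{G}_{\overline{I}}$. *)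

theory Defs
  imports Complex_Main "HOL-Library.Function_Algebras"
begin

text \<open>Vectors over the finite field are functions nat => 'a; F_q^m is the set of
  functions vanishing outside an index set (coordinates are 0-based).\<close>

definition fscale :: "'a::field \<Rightarrow> (nat \<Rightarrow> 'a) \<Rightarrow> (nat \<Rightarrow> 'a)" where
  "fscale c v = (\<lambda>i. c * v i)"

global_interpretation fvec: vector_space "fscale :: 'a::field \<Rightarrow> (nat \<Rightarrow> 'a) \<Rightarrow> (nat \<Rightarrow> 'a)"
  by unfold_locales (auto simp: fscale_def algebra_simps fun_eq_iff)

definition lab :: "nat set \<Rightarrow> (nat \<Rightarrow> 'a::zero) set" where
  "lab K = {v. \<forall>i. i \<notin> K \<longrightarrow> v i = 0}"

definition proj :: "nat set \<Rightarrow> (nat \<Rightarrow> 'a::zero) \<Rightarrow> (nat \<Rightarrow> 'a)" where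
  "proj K v = (\<lambda>i. if i \<in> K then v i else 0)"

definition proj_code :: "nat set \<Rightarrow> (nat \<Rightarrow> 'a::zero) set \<Rightarrow> (nat \<Rightarrow> 'a) set" where
  "proj_code K C = proj K ` C"

definition coset :: "(nat \<Rightarrow> 'a::plus) set \<Rightarrow> (nat \<Rightarrow> 'a) \<Rightarrow> (nat \<Rightarrow> 'a) set" where
  "coset C2 x = (\<lambda>c. x + c) ` C2"

definition quotient_iso ::
  "nat \<Rightarrow> (nat \<Rightarrow> 'a::field) set \<Rightarrow> (nat \<Rightarrow> 'a) set \<Rightarrow> ((nat \<Rightarrow> 'a) \<Rightarrow> (nat \<Rightarrow> 'a) set) \<Rightarrow> bool" where
  "quotient_iso L C1 C2 f \<longleftrightarrow>
     (\<forall>s\<in>lab {..<L}. \<exists>x\<in>C1. f s = coset C2 x) \<and>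
     (\<forall>s\<in>lab {..<L}. \<forall>t\<in>lab {..<L}. f (s + t) = {x + y | x y. x \<in> f s \<and> y \<in> f t}) \<and>
     (\<forall>c. \<forall>s\<in>lab {..<L}. \<forall>x\<in>f s. f (fscale c s) = coset C2 (fscale c x)) \<and>
     inj_on f (lab {..<L}) \<and>
     (\<forall>x\<in>C1. \<exists>s\<in>lab {..<L}. x \<in> f s)"

text \<open>Operators on the subsystem with basis labels lab K: matrices indexed by labels.\<close>
type_synonym 'a op = "(nat \<Rightarrow> 'a) \<Rightarrow> (nat \<Rightarrow> 'a) \<Rightarrow> complex"

definition density :: "nat set \<Rightarrow> ('a::{finite,zero}) op \<Rightarrow> bool" where
  "density K \<rho> \<longleftrightarrow>
     (\<forall>a\<in>lab K. \<forall>b\<in>lab K. \<rho> b a = cnj (\<rho> a b)) \<and>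
     (\<forall>\<psi> :: (nat \<Rightarrow> 'a) \<Rightarrow> complex.
        Im (\<Sum>a\<in>lab K. \<Sum>b\<in>lab K. cnj (\<psi> a) * \<rho> a b * \<psi> b) = 0 \<and>
        0 \<le> Re (\<Sum>a\<in>lab K. \<Sum>b\<in>lab K. cnj (\<psi> a) * \<rho> a b * \<psi> b)) \<and>
     (\<Sum>a\<in>lab K. \<rho> a a) = 1"

text \<open>Secret state rho_I (x) fully mixed state on the complement of I in {0..<L}.\<close>
definition secret_state :: "nat \<Rightarrow> nat set \<Rightarrow> ('a::{finite,zero}) op \<Rightarrow> 'a op" where
  "secret_state L I \<rho> = (\<lambda>s s'. \<rho> (proj I s) (proj I s') *
      (if proj ({..<L} - I) s = proj ({..<L} - I) s'
       then 1 / of_nat (card (UNIV :: 'a set) ^ card ({..<L} - I)) else 0))"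

text \<open>Amplitude of the encoded basis state |s> at the basis state |x> of the shares.\<close>
definition enc_ket :: "(nat \<Rightarrow> 'a) set \<Rightarrow> ((nat \<Rightarrow> 'a) \<Rightarrow> (nat \<Rightarrow> 'a) set) \<Rightarrow> (nat \<Rightarrow> 'a) \<Rightarrow> (nat \<Rightarrow> 'a) \<Rightarrow> complex" where
  "enc_ket C2 f s x = (if x \<in> f s then 1 / csqrt (of_nat (card C2)) else 0)"

text \<open>Encoded state V rho V^dagger.\<close>
definition encode :: "nat \<Rightarrow> (nat \<Rightarrow> 'a::{finite,zero}) set \<Rightarrow> ((nat \<Rightarrow> 'a) \<Rightarrow> (nat \<Rightarrow> 'a) set) \<Rightarrow> 'a op \<Rightarrow> 'a op" where
  "encode L C2 f \<rho> = (\<lambda>x y. \<Sum>s\<in>lab {..<L}. \<Sum>s'\<in>lab {..<L}.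
      enc_ket C2 f s x * \<rho> s s' * cnj (enc_ket C2 f s' y))"

text \<open>Partial trace over the shares outside J (shares are 0..<n); result indexed by lab J.\<close>
definition ptrace :: "nat \<Rightarrow> nat set \<Rightarrow> ('a::{finite,monoid_add}) op \<Rightarrow> 'a op" where
  "ptrace n J M = (\<lambda>a b. \<Sum>c\<in>lab ({..<n} - J). M (a + c) (b + c))"

definition strongly_secure ::
  "nat \<Rightarrow> nat \<Rightarrow> (nat \<Rightarrow> 'a::{finite,field}) set \<Rightarrow> ((nat \<Rightarrow> 'a) \<Rightarrow> (nat \<Rightarrow> 'a) set) \<Rightarrow> nat set \<Rightarrow> nat set \<Rightarrow> bool" where
  "strongly_secure n L C2 f I J \<longleftrightarrow>
     (\<forall>\<rho> \<rho>'. density I \<rho> \<longrightarrow> density I \<rho>' \<longrightarrow>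
        (\<forall>a\<in>lab J. \<forall>b\<in>lab J.
           ptrace n J (encode L C2 f (secret_state L I \<rho>)) a b =
           ptrace n J (encode L C2 f (secret_state L I \<rho>')) a b))"

text \<open>The vector (x, P_{I-bar}(s)): the coordinate s_i (i in I-bar) is placed at position n + i.\<close>
definition ext_vec :: "nat \<Rightarrow> nat set \<Rightarrow> (nat \<Rightarrow> 'a::zero) \<Rightarrow> (nat \<Rightarrow> 'a) \<Rightarrow> (nat \<Rightarrow> 'a)" where
  "ext_vec n Ibar x s = (\<lambda>k. if k < n then x k else if k - n \<in> Ibar then s (k - n) else 0)"

definition C1' :: "nat \<Rightarrow> nat \<Rightarrow> nat set \<Rightarrow> ((nat \<Rightarrow> 'a::zero) \<Rightarrow> (nat \<Rightarrow> 'a) set) \<Rightarrow> (nat \<Rightarrow> 'a) set" where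
  "C1' n L I f = {ext_vec n ({..<L} - I) x s | s x. s \<in> lab {..<L} \<and> x \<in> f s}"

definition C2' :: "nat \<Rightarrow> nat \<Rightarrow> nat set \<Rightarrow> ((nat \<Rightarrow> 'a::zero) \<Rightarrow> (nat \<Rightarrow> 'a) set) \<Rightarrow> (nat \<Rightarrow> 'a) set" where
  "C2' n L I f = {ext_vec n ({..<L} - I) x s | s x. s \<in> lab {..<L} \<and> proj I s = 0 \<and> x \<in> f s}"

end

theory Submission
  imports Defs "HOL-Library.FuncSet"
begin

lemma fscale_apply: "fscale c v i = c * v i" by (simp add: fscale_def)

lemma card_span_indep:
  fixes B :: "(nat \<Rightarrow> 'a::{finite,field}) set"
  shows "finite B \<Longrightarrow> fvec.independent B \<Longrightarrow> card (fvec.span B) = card (UNIV :: 'a set) ^ card B"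
proof (induction B rule: finite_induct)
  case empty then show ?case by simp
next
  case (insert a B)
  have iB: "fvec.independent B" and na: "a \<notin> fvec.span B"
    using insert.prems insert.hyps by (auto simp: fvec.independent_insert)
  have eq: "fvec.span (insert a B) = (\<lambda>(k,y). fscale k a + y) ` (UNIV \<times> fvec.span B)"
  proof (rule set_eqI, rule iffI)
    fix x assume "x \<in> fvec.span (insert a B)"
    then obtain k where "x - fscale k a \<in> fvec.span B" by (auto simp: fvec.span_insert)
    then show "x \<in> (\<lambda>(k,y). fscale k a + y) ` (UNIV \<times> fvec.span B)"
      by (intro image_eqI[of _ _ "(k, x - fscale k a)"]) auto
  next
    fix x assume "x \<in> (\<lambda>(k,y). fscale k a + y) ` (UNIV \<times> fvec.span B)"
    then obtain k y where "y \<in> fvec.span B" "x = fscale k a + y" by auto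
    then show "x \<in> fvec.span (insert a B)" by (auto simp: fvec.span_insert intro!: exI[of _ k])
  qed
  have inj: "inj_on (\<lambda>(k,y). fscale k a + y) (UNIV \<times> fvec.span B)"
  proof (rule inj_onI, clarify)
    fix k y k' y' assume y: "y \<in> fvec.span B" "y' \<in> fvec.span B"
      and e: "fscale k a + y = fscale k' a + y'"
    have "fscale (k - k') a = y' - y" using e
      by (auto simp: fun_eq_iff algebra_simps fscale_def)
    then have s: "fscale (k - k') a \<in> fvec.span B" using y by (simp add: fvec.span_diff)
    show "k = k' \<and> y = y'"
    proof (cases "k = k'")
      case True then show ?thesis using e by simp
    next
      case False
      then have "fscale (inverse (k - k')) (fscale (k - k') a) = a"
        by (simp add: fun_eq_iff fscale_def)
      then have "a \<in> fvec.span B" using fvec.span_scale[OF s, of "inverse (k-k')"] by simp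
      then show ?thesis using na by simp
    qed
  qed
  have "card (fvec.span (insert a B)) = card (UNIV :: 'a set) * card (fvec.span B)"
    unfolding eq card_image[OF inj] card_cartesian_product by simp
  then show ?case using insert iB by simp
qed

lemma card_subspace:
  fixes S :: "(nat \<Rightarrow> 'a::{finite,field}) set"
  assumes "fvec.subspace S" "finite S"
  shows "card S = card (UNIV :: 'a set) ^ fvec.dim S"
proof -
  obtain B where B: "B \<subseteq> S" "fvec.independent B" "S \<subseteq> fvec.span B" "card B = fvec.dim S"
    by (rule fvec.basis_exists)
  have "fvec.span B \<subseteq> S" using B(1) assms(1) by (meson fvec.span_minimal)
  then have "fvec.span B = S" using B(3) by auto
  moreover have "finite B" using B(1) assms(2) finite_subset by auto
  ultimately show ?thesis using card_span_indep B by metis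
qed

lemma subspace_image:
  fixes C :: "(nat \<Rightarrow> 'a::field) set"
  assumes "fvec.subspace C"
    and add: "\<And>x y. x \<in> C \<Longrightarrow> y \<in> C \<Longrightarrow> h (x + y) = h x + h y"
    and sc: "\<And>c x. x \<in> C \<Longrightarrow> h (fscale c x) = fscale c (h x)"
  shows "fvec.subspace (h ` C)"
proof -
  have z: "0 \<in> C" using assms(1) by (simp add: fvec.subspace_def)
  have f0: "fscale 0 v = 0" for v :: "nat \<Rightarrow> 'a" by (simp add: fun_eq_iff fscale_def)
  have "h 0 = 0" using sc[OF z, of 0] by (simp add: f0)
  show ?thesis
  proof (rule fvec.subspaceI)
    show "0 \<in> h ` C" using z \<open>h 0 = 0\<close> by (metis image_eqI)
  next
    fix x y assume "x \<in> h ` C" "y \<in> h ` C"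
    then obtain x' y' where "x' \<in> C" "y' \<in> C" "x = h x'" "y = h y'" by blast
    moreover have "x' + y' \<in> C" using assms(1) calculation(1,2) by (simp add: fvec.subspace_add)
    ultimately show "x + y \<in> h ` C" using add by (metis image_eqI)
  next
    fix c x assume "x \<in> h ` C"
    then obtain x' where "x' \<in> C" "x = h x'" by blast
    moreover have "fscale c x' \<in> C" using assms(1) calculation(1) by (simp add: fvec.subspace_scale)
    ultimately show "fscale c x \<in> h ` C" using sc by (metis image_eqI)
  qed
qed

lemma card_kernel:
  fixes h :: "'b::ab_group_add \<Rightarrow> 'c::ab_group_add"
  assumes fin: "finite C" and cl: "\<And>x y. x \<in> C \<Longrightarrow> y \<in> C \<Longrightarrow> x - y \<in> C"
    "\<And>x y. x \<in> C \<Longrightarrow> y \<in> C \<Longrightarrow> x + y \<in> C"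
    and hom: "\<And>x y. x \<in> C \<Longrightarrow> y \<in> C \<Longrightarrow> h (x - y) = h x - h y"
  shows "card C = card (h ` C) * card {x\<in>C. h x = 0}"
proof -
  have "card C = (\<Sum>y\<in>h ` C. card {x\<in>C. h x = y})"
    using sum.image_gen[OF fin, of "\<lambda>_. 1::nat" h] by simp
  also have "\<dots> = (\<Sum>y\<in>h ` C. card {x\<in>C. h x = 0})"
  proof (rule sum.cong[OF refl])
    fix y assume "y \<in> h ` C"
    then obtain x0 where x0: "x0 \<in> C" "y = h x0" by auto
    have h0: "h 0 = 0" using hom[OF x0(1) x0(1)] by simp
    have "bij_betw (\<lambda>t. t - x0) {x\<in>C. h x = y} {x\<in>C. h x = 0}"
    proof (rule bij_betwI[where g = "\<lambda>k. k + x0"])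
      show "(\<lambda>t. t - x0) \<in> {x \<in> C. h x = y} \<rightarrow> {x \<in> C. h x = 0}"
      proof
        fix t assume t: "t \<in> {x \<in> C. h x = y}"
        then have "t - x0 \<in> C" "h (t - x0) = h t - h x0" using x0(1) cl(1) hom by auto
        then show "t - x0 \<in> {x \<in> C. h x = 0}" using t x0(2) by simp
      qed
      show "(\<lambda>k. k + x0) \<in> {x \<in> C. h x = 0} \<rightarrow> {x \<in> C. h x = y}"
      proof
        fix k assume k: "k \<in> {x \<in> C. h x = 0}"
        then have kx: "k + x0 \<in> C" using x0(1) cl(2) by simp
        have "h (k + x0 - x0) = h (k + x0) - h x0" using kx x0(1) hom by blast
        then show "k + x0 \<in> {x \<in> C. h x = y}" using k kx x0(2) by simp
      qed
      show "\<And>x. x \<in> {x \<in> C. h x = y} \<Longrightarrow> x - x0 + x0 = x" by simp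
      show "\<And>x. x \<in> {x \<in> C. h x = 0} \<Longrightarrow> x + x0 - x0 = x" by simp
    qed
    then show "card {x\<in>C. h x = y} = card {x\<in>C. h x = 0}" by (rule bij_betw_same_card)
  qed
  finally show ?thesis by simp
qed

lemma finite_lab: "finite K \<Longrightarrow> finite (lab K :: (nat \<Rightarrow> 'a::{finite,zero}) set)"
proof -
  assume K: "finite K"
  have "inj_on (\<lambda>v. restrict v K) (lab K :: (nat \<Rightarrow> 'a) set)"
  proof (rule inj_onI)
    fix x y :: "nat \<Rightarrow> 'a" assume xy: "x \<in> lab K" "y \<in> lab K" "restrict x K = restrict y K"
    show "x = y"
    proof
      fix i show "x i = y i"
      proof (cases "i \<in> K")
        case True then show ?thesis using fun_cong[OF xy(3), of i] by simp
      next
        case False then show ?thesis using xy(1,2) by (simp add: lab_def)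
      qed
    qed
  qed
  moreover have "(\<lambda>v. restrict v K) ` (lab K :: (nat \<Rightarrow> 'a) set) \<subseteq> PiE K (\<lambda>_. UNIV)" by auto
  moreover have "finite (PiE K (\<lambda>_. UNIV :: 'a set))" using K by (simp add: finite_PiE)
  ultimately have "finite ((\<lambda>v. restrict v K) ` (lab K :: (nat \<Rightarrow> 'a) set))" by (meson finite_subset)
  then show ?thesis using \<open>inj_on _ _\<close> by (rule finite_imageD)
qed

lemma card_lab: "finite K \<Longrightarrow> card (lab K :: (nat \<Rightarrow> 'a::{finite,zero}) set) = card (UNIV :: 'a set) ^ card K"
proof -
  assume K: "finite K"
  have "bij_betw (\<lambda>v. restrict v K) (lab K :: (nat \<Rightarrow> 'a) set) (PiE K (\<lambda>_. UNIV))"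
  proof (rule bij_betwI[where g = "\<lambda>g i. if i \<in> K then g i else 0"])
    show "(\<lambda>v. restrict v K) \<in> (lab K :: (nat \<Rightarrow> 'a) set) \<rightarrow> PiE K (\<lambda>_. UNIV)" by auto
    show "(\<lambda>g i. if i \<in> K then g i else 0) \<in> PiE K (\<lambda>_. UNIV) \<rightarrow> (lab K :: (nat \<Rightarrow> 'a) set)"
      by (auto simp: lab_def)
    show "\<And>x. x \<in> (lab K :: (nat \<Rightarrow> 'a) set) \<Longrightarrow> (\<lambda>i. if i \<in> K then restrict x K i else 0) = x"
      by (auto simp: lab_def fun_eq_iff)
    show "\<And>y. y \<in> PiE K (\<lambda>_. UNIV :: 'a set) \<Longrightarrow> restrict (\<lambda>i. if i \<in> K then y i else 0) K = y"
    proof -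
      fix y :: "nat \<Rightarrow> 'a" assume "y \<in> PiE K (\<lambda>_. UNIV :: 'a set)"
      then have "\<And>i. i \<notin> K \<Longrightarrow> y i = undefined" by (simp add: PiE_def extensional_def)
      then show "restrict (\<lambda>i. if i \<in> K then y i else 0) K = y" by (intro ext) simp
    qed
  qed
  then have "card (lab K :: (nat \<Rightarrow> 'a) set) = card (PiE K (\<lambda>_. UNIV :: 'a set))" by (rule bij_betw_same_card)
  also have "\<dots> = (\<Prod>i\<in>K. card (UNIV :: 'a set))" by (rule card_PiE[OF K])
  finally show ?thesis by simp
qed


locale qss =
  fixes C1 C2 :: "(nat \<Rightarrow> 'a::{finite,field}) set" and f :: "(nat \<Rightarrow> 'a) \<Rightarrow> (nat \<Rightarrow> 'a) set"
    and n L :: nat and I J :: "nat set"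
  assumes C1n: "C1 \<subseteq> lab {..<n}" and sub1: "fvec.subspace C1" and sub2: "fvec.subspace C2"
    and C21: "C2 \<subset> C1" and qi: "quotient_iso L C1 C2 f" and IL: "I \<subseteq> {..<L}" and Jn: "J \<subseteq> {..<n}"
begin

definition sig :: "(nat \<Rightarrow> 'a) \<Rightarrow> (nat \<Rightarrow> 'a)" where
  "sig x = (THE s. s \<in> lab {..<L} \<and> x \<in> f s)"

definition w :: "(nat \<Rightarrow> 'a) \<Rightarrow> (nat \<Rightarrow> 'a)" where "w x = proj I (sig x)"

lemma qi1: "s \<in> lab {..<L} \<Longrightarrow> \<exists>x\<in>C1. f s = coset C2 x"
  and qi2: "s \<in> lab {..<L} \<Longrightarrow> t \<in> lab {..<L} \<Longrightarrow> f (s + t) = {x + y | x y. x \<in> f s \<and> y \<in> f t}"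
  and qi3: "s \<in> lab {..<L} \<Longrightarrow> x \<in> f s \<Longrightarrow> f (fscale c s) = coset C2 (fscale c x)"
  and qi4: "inj_on f (lab {..<L})"
  and qi5: "x \<in> C1 \<Longrightarrow> \<exists>s\<in>lab {..<L}. x \<in> f s"
  using qi unfolding quotient_iso_def by blast+

lemma C2C1: "C2 \<subseteq> C1" using C21 by auto

lemma zero_C2: "0 \<in> C2" using sub2 by (simp add: fvec.subspace_0)
lemma zero_C1: "0 \<in> C1" using sub1 by (simp add: fvec.subspace_0)
lemma add_C1: "x \<in> C1 \<Longrightarrow> y \<in> C1 \<Longrightarrow> x + y \<in> C1" using sub1 by (simp add: fvec.subspace_add)
lemma diff_C1: "x \<in> C1 \<Longrightarrow> y \<in> C1 \<Longrightarrow> x - y \<in> C1" using sub1 by (simp add: fvec.subspace_diff)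
lemma scale_C1: "x \<in> C1 \<Longrightarrow> fscale c x \<in> C1" using sub1 by (simp add: fvec.subspace_scale)
lemma add_C2: "x \<in> C2 \<Longrightarrow> y \<in> C2 \<Longrightarrow> x + y \<in> C2" using sub2 by (simp add: fvec.subspace_add)
lemma diff_C2: "x \<in> C2 \<Longrightarrow> y \<in> C2 \<Longrightarrow> x - y \<in> C2" using sub2 by (simp add: fvec.subspace_diff)

lemma fin_C1: "finite C1" using C1n finite_lab[of "{..<n}"] finite_subset by auto
lemma fin_C2: "finite C2" using C2C1 fin_C1 finite_subset by auto

lemma lab_add: "(x::nat\<Rightarrow>'a) \<in> lab K \<Longrightarrow> y \<in> lab K \<Longrightarrow> x + y \<in> lab K" by (simp add: lab_def)
lemma lab_diff: "(x::nat\<Rightarrow>'a) \<in> lab K \<Longrightarrow> y \<in> lab K \<Longrightarrow> x - y \<in> lab K" by (simp add: lab_def)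
lemma lab_scale: "(x::nat\<Rightarrow>'a) \<in> lab K \<Longrightarrow> fscale c x \<in> lab K" by (simp add: lab_def fscale_def)
lemma lab_zero: "(0::nat\<Rightarrow>'a) \<in> lab K" by (simp add: lab_def)

lemma fs_C1: "s \<in> lab {..<L} \<Longrightarrow> f s \<subseteq> C1"
proof
  fix z assume s: "s \<in> lab {..<L}" and z: "z \<in> f s"
  obtain x where x: "x \<in> C1" "f s = coset C2 x" using qi1[OF s] by blast
  then obtain c where "c \<in> C2" "z = x + c" using z by (auto simp: coset_def)
  then show "z \<in> C1" using x C2C1 add_C1 by auto
qed

lemma self_in_coset: "x \<in> coset C2 x"
  using zero_C2 unfolding coset_def by (metis add.right_neutral image_eqI)

lemma uniq:
  assumes s: "s \<in> lab {..<L}" and t: "t \<in> lab {..<L}" and xs: "x \<in> f s" and xt: "x \<in> f t"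
  shows "s = t"
proof -
  obtain x1 where x1: "f s = coset C2 x1" using qi1[OF s] by blast
  obtain x2 where x2: "f t = coset C2 x2" using qi1[OF t] by blast
  obtain c1 where c1: "c1 \<in> C2" "x = x1 + c1" using xs x1 by (auto simp: coset_def)
  obtain c2 where c2: "c2 \<in> C2" "x = x2 + c2" using xt x2 by (auto simp: coset_def)
  have e: "x1 = x2 + (c2 - c1)" using c1 c2 by (simp add: algebra_simps)
  have "coset C2 x1 = coset C2 x2"
  proof
    show "coset C2 x1 \<subseteq> coset C2 x2"
    proof
      fix z assume "z \<in> coset C2 x1"
      then obtain c where c: "c \<in> C2" "z = x1 + c" by (auto simp: coset_def)
      have "c2 - c1 + c \<in> C2" using c c1 c2 add_C2 diff_C2 by auto
      moreover have "z = x2 + (c2 - c1 + c)" using c e by (simp add: algebra_simps)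
      ultimately show "z \<in> coset C2 x2" unfolding coset_def by blast
    qed
  next
    show "coset C2 x2 \<subseteq> coset C2 x1"
    proof
      fix z assume "z \<in> coset C2 x2"
      then obtain c where c: "c \<in> C2" "z = x2 + c" by (auto simp: coset_def)
      have "c - (c2 - c1) \<in> C2" using c c1 c2 add_C2 diff_C2 by auto
      moreover have "z = x1 + (c - (c2 - c1))" using c e by (simp add: algebra_simps)
      ultimately show "z \<in> coset C2 x1" unfolding coset_def by blast
    qed
  qed
  then have "f s = f t" using x1 x2 by simp
  then show ?thesis using qi4 s t by (meson inj_onD)
qed

lemma sig_eq: "s \<in> lab {..<L} \<Longrightarrow> x \<in> f s \<Longrightarrow> sig x = s"
  unfolding sig_def by (rule the_equality) (auto intro: uniq)

lemma sig: "x \<in> C1 \<Longrightarrow> sig x \<in> lab {..<L} \<and> x \<in> f (sig x)"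
  using qi5 sig_eq by metis

lemma sig_add: "x \<in> C1 \<Longrightarrow> y \<in> C1 \<Longrightarrow> sig (x + y) = sig x + sig y"
proof -
  assume x: "x \<in> C1" and y: "y \<in> C1"
  have "x + y \<in> f (sig x + sig y)" using qi2[of "sig x" "sig y"] sig[OF x] sig[OF y] by blast
  then show ?thesis using sig_eq lab_add sig[OF x] sig[OF y] by blast
qed

lemma sig_scale: "x \<in> C1 \<Longrightarrow> sig (fscale c x) = fscale c (sig x)"
proof -
  assume x: "x \<in> C1"
  have "fscale c x \<in> f (fscale c (sig x))" using qi3[of "sig x" x c] sig[OF x] self_in_coset by auto
  then show ?thesis using sig_eq lab_scale sig[OF x] by blast
qed

lemma sig_diff: "x \<in> C1 \<Longrightarrow> y \<in> C1 \<Longrightarrow> sig (x - y) = sig x - sig y"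
proof -
  assume x: "x \<in> C1" and y: "y \<in> C1"
  have "sig (y + (x - y)) = sig y + sig (x - y)" using sig_add[OF y diff_C1[OF x y]] .
  then show ?thesis by (simp add: algebra_simps)
qed

lemma sig_zero: "sig 0 = 0"
  using sig_diff[OF zero_C1 zero_C1] by simp

lemma sig_surj: "u \<in> lab {..<L} \<Longrightarrow> \<exists>x\<in>C1. sig x = u"
proof -
  assume u: "u \<in> lab {..<L}"
  obtain x where x: "x \<in> C1" "f u = coset C2 x" using qi1[OF u] by blast
  then have "x \<in> f u" using self_in_coset by simp
  then show ?thesis using sig_eq[OF u] x(1) by blast
qed

lemma proj_add: "proj K ((x::nat\<Rightarrow>'a) + y) = proj K x + proj K y" by (simp add: proj_def fun_eq_iff)
lemma proj_diff: "proj K ((x::nat\<Rightarrow>'a) - y) = proj K x - proj K y" by (simp add: proj_def fun_eq_iff)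
lemma proj_scale: "proj K (fscale c (x::nat\<Rightarrow>'a)) = fscale c (proj K x)" by (simp add: proj_def fun_eq_iff fscale_def)
lemma proj_lab: "proj K (x::nat\<Rightarrow>'a) \<in> lab K" by (simp add: proj_def lab_def)
lemma proj_id: "(x::nat\<Rightarrow>'a) \<in> lab K \<Longrightarrow> proj K x = x" by (simp add: proj_def lab_def fun_eq_iff)

lemma w_diff: "x \<in> C1 \<Longrightarrow> y \<in> C1 \<Longrightarrow> w (x - y) = w x - w y"
  by (simp add: w_def sig_diff proj_diff)

lemma w_surj: "u \<in> lab I \<Longrightarrow> \<exists>x\<in>C1. w x = u"
proof -
  assume u: "u \<in> lab I"
  then have "u \<in> lab {..<L}" using IL by (auto simp: lab_def)
  then obtain x where "x \<in> C1" "sig x = u" using sig_surj by blast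
  then show ?thesis using proj_id[OF u] by (auto simp: w_def)
qed

end

lemma density_rank1:
  fixes v :: "(nat \<Rightarrow> 'a::{finite,zero}) \<Rightarrow> real"
  assumes fin: "finite K" and tr: "(\<Sum>a\<in>lab K. v a * v a) = 1"
  shows "density K (\<lambda>a b. complex_of_real (v a * v b))"
  unfolding density_def
proof (intro conjI allI ballI)
  fix a b :: "nat \<Rightarrow> 'a"
  show "complex_of_real (v b * v a) = cnj (complex_of_real (v a * v b))" by (simp add: mult.commute)
next
  fix \<psi> :: "(nat \<Rightarrow> 'a) \<Rightarrow> complex"
  define z where "z = (\<Sum>b\<in>lab K. complex_of_real (v b) * \<psi> b)"
  have "(\<Sum>a\<in>lab K. \<Sum>b\<in>lab K. cnj (\<psi> a) * complex_of_real (v a * v b) * \<psi> b)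
      = (\<Sum>a\<in>lab K. cnj (\<psi> a) * complex_of_real (v a)) * z"
    unfolding z_def sum_product by (simp add: mult_ac)
  also have "(\<Sum>a\<in>lab K. cnj (\<psi> a) * complex_of_real (v a)) = cnj z"
    unfolding z_def by (simp add: mult.commute)
  also have "cnj z * z = complex_of_real ((Re z)\<^sup>2 + (Im z)\<^sup>2)"
    using complex_mult_cnj[of z] by (simp add: mult.commute)
  finally have eq: "(\<Sum>a\<in>lab K. \<Sum>b\<in>lab K. cnj (\<psi> a) * complex_of_real (v a * v b) * \<psi> b)
      = complex_of_real ((Re z)\<^sup>2 + (Im z)\<^sup>2)" .
  show "Im (\<Sum>a\<in>lab K. \<Sum>b\<in>lab K. cnj (\<psi> a) * complex_of_real (v a * v b) * \<psi> b) = 0"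
    unfolding eq by simp
  show "0 \<le> Re (\<Sum>a\<in>lab K. \<Sum>b\<in>lab K. cnj (\<psi> a) * complex_of_real (v a * v b) * \<psi> b)"
    unfolding eq by simp
next
  have "(\<Sum>a\<in>lab K. complex_of_real (v a * v a)) = complex_of_real (\<Sum>a\<in>lab K. v a * v a)"
    by simp
  then show "(\<Sum>a\<in>lab K. complex_of_real (v a * v a)) = 1" using tr by simp
qed

context qss begin

definition kk :: complex where "kk = 1 / csqrt (of_nat (card C2))"
definition kap :: complex where
  "kap = kk * cnj kk * (1 / of_nat (card (UNIV :: 'a set) ^ card ({..<L} - I)))"

lemma kap_nz: "kap \<noteq> 0"
proof -
  have "card C2 > 0" using fin_C2 zero_C2 card_gt_0_iff by blast
  then have "kk \<noteq> 0" by (simp add: kk_def)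
  moreover have "card (UNIV :: 'a set) > 0" by (simp add: card_gt_0_iff)
  ultimately show ?thesis by (simp add: kap_def)
qed

lemma in_f_iff: "s \<in> lab {..<L} \<Longrightarrow> x \<in> f s \<longleftrightarrow> x \<in> C1 \<and> s = sig x"
  using fs_C1 sig_eq sig by blast

lemma sumE:
  fixes c :: complex
  shows "(\<Sum>s\<in>lab {..<L}. (if x \<in> f s then c else 0) * G s) = (if x \<in> C1 then c * G (sig x) else 0)"
proof -
  have "(\<Sum>s\<in>lab {..<L}. (if x \<in> f s then c else 0) * G s)
      = (\<Sum>s\<in>lab {..<L}. if s = sig x then (if x \<in> C1 then c * G s else 0) else 0)"
    by (rule sum.cong[OF refl]) (auto simp: in_f_iff)
  also have "\<dots> = (if x \<in> C1 then c * G (sig x) else 0)"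
  proof -
    have fL: "finite (lab {..<L} :: (nat \<Rightarrow> 'a) set)" by (rule finite_lab) simp
    show ?thesis using sig[of x] fL by (cases "x \<in> C1") simp_all
  qed
  finally show ?thesis .
qed

lemma enc_formula:
  "encode L C2 f (secret_state L I \<rho>) x y =
    (if x \<in> C1 \<and> y \<in> C1 \<and> proj ({..<L} - I) (sig x) = proj ({..<L} - I) (sig y)
     then kap * \<rho> (w x) (w y) else 0)"
proof -
  have ek: "\<And>s z. enc_ket C2 f s z = (if z \<in> f s then kk else 0)" by (simp add: enc_ket_def kk_def)
  have "encode L C2 f (secret_state L I \<rho>) x y
     = (\<Sum>s\<in>lab {..<L}. (if x \<in> f s then kk else 0) *
          (\<Sum>s'\<in>lab {..<L}. (if y \<in> f s' then cnj kk else 0) * secret_state L I \<rho> s s'))"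
    unfolding encode_def ek sum_distrib_left
    by (intro sum.cong refl) (simp add: mult_ac)
  also have "\<dots> = (if x \<in> C1 then kk * (if y \<in> C1 then cnj kk * secret_state L I \<rho> (sig x) (sig y) else 0) else 0)"
    unfolding sumE ..
  also have "\<dots> = (if x \<in> C1 \<and> y \<in> C1 \<and> proj ({..<L} - I) (sig x) = proj ({..<L} - I) (sig y)
     then kap * \<rho> (w x) (w y) else 0)"
    by (simp add: secret_state_def kap_def w_def mult_ac)
  finally show ?thesis .
qed

abbreviation "Jb \<equiv> {..<n} - J"
abbreviation "Ib \<equiv> {..<L} - I"

definition Pc :: "(nat \<Rightarrow> 'a) \<Rightarrow> (nat \<Rightarrow> 'a) \<Rightarrow> (nat \<Rightarrow> 'a) \<Rightarrow> bool" where
  "Pc a b c \<longleftrightarrow> a + c \<in> C1 \<and> b + c \<in> C1 \<and> proj Ib (sig (a + c)) = proj Ib (sig (b + c))"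

lemma T_formula:
  "ptrace n J (encode L C2 f (secret_state L I \<rho>)) a b =
    kap * (\<Sum>c\<in>lab Jb. if Pc a b c then \<rho> (w (a + c)) (w (b + c)) else 0)"
  unfolding ptrace_def enc_formula sum_distrib_left Pc_def
  by (intro sum.cong refl) simp

definition cnt :: "(nat \<Rightarrow> 'a) \<Rightarrow> (nat \<Rightarrow> 'a) \<Rightarrow> nat" where
  "cnt b u = card {c \<in> lab Jb. b + c \<in> C1 \<and> w (b + c) = u}"

lemma fin_Jb: "finite (lab Jb :: (nat \<Rightarrow> 'a) set)" by (rule finite_lab) simp
lemma fin_I: "finite (lab I :: (nat \<Rightarrow> 'a) set)" using IL by (intro finite_lab) (auto intro: finite_subset)

lemma w_lab: "w x \<in> lab I" by (simp add: w_def proj_lab)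

lemma sum_diag:
  "(\<Sum>c\<in>lab Jb. if b + c \<in> C1 then \<rho> (w (b + c)) (w (b + c)) else 0)
    = (\<Sum>u\<in>lab I. of_nat (cnt b u) * \<rho> u u)"
proof -
  have "(\<Sum>c\<in>lab Jb. if b + c \<in> C1 then \<rho> (w (b + c)) (w (b + c)) else 0)
      = (\<Sum>c\<in>lab Jb. \<Sum>u\<in>lab I. if b + c \<in> C1 \<and> w (b + c) = u then \<rho> u u else 0)"
  proof (rule sum.cong[OF refl])
    fix c
    have "(\<Sum>u\<in>lab I. if b + c \<in> C1 \<and> w (b + c) = u then \<rho> u u else 0)
        = (\<Sum>u\<in>lab I. if w (b + c) = u then (if b + c \<in> C1 then \<rho> u u else 0) else 0)"
      by (rule sum.cong) auto
    also have "\<dots> = (if b + c \<in> C1 then \<rho> (w (b + c)) (w (b + c)) else 0)"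
      using w_lab[of "b + c"] fin_I by (cases "b + c \<in> C1") (simp_all add: sum.delta')
    finally show "(if b + c \<in> C1 then \<rho> (w (b + c)) (w (b + c)) else 0) =
        (\<Sum>u\<in>lab I. if b + c \<in> C1 \<and> w (b + c) = u then \<rho> u u else 0)" by simp
  qed
  also have "\<dots> = (\<Sum>u\<in>lab I. \<Sum>c\<in>lab Jb. if b + c \<in> C1 \<and> w (b + c) = u then \<rho> u u else 0)"
    by (rule sum.swap)
  also have "\<dots> = (\<Sum>u\<in>lab I. of_nat (cnt b u) * \<rho> u u)"
  proof (rule sum.cong[OF refl])
    fix u
    have "(\<Sum>c\<in>lab Jb. if b + c \<in> C1 \<and> w (b + c) = u then \<rho> u u else 0)
        = (\<Sum>c\<in>{c \<in> lab Jb. b + c \<in> C1 \<and> w (b + c) = u}. \<rho> u u)"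
      using sum.inter_filter[OF fin_Jb, of "\<lambda>_. \<rho> u u" "\<lambda>c. b + c \<in> C1 \<and> w (b + c) = u"] by simp
    also have "\<dots> = of_nat (cnt b u) * \<rho> u u" by (simp add: cnt_def)
    finally show "(\<Sum>c\<in>lab Jb. if b + c \<in> C1 \<and> w (b + c) = u then \<rho> u u else 0) = of_nat (cnt b u) * \<rho> u u" .
  qed
  finally show ?thesis .
qed

lemma T_diag:
  "ptrace n J (encode L C2 f (secret_state L I \<rho>)) b b =
    kap * (\<Sum>u\<in>lab I. of_nat (cnt b u) * \<rho> u u)"
  unfolding T_formula sum_diag[symmetric] Pc_def by simp

end

context qss begin

definition condA :: bool where
  "condA \<longleftrightarrow> (\<forall>d\<in>C1. proj Jb d = 0 \<and> proj Ib (sig d) = 0 \<longrightarrow> proj I (sig d) = 0)"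

definition C0 :: "(nat \<Rightarrow> 'a) set" where "C0 = {x \<in> C1. w x = 0}"

definition condB :: bool where "condB \<longleftrightarrow> proj J ` C1 \<subseteq> proj J ` C0"

lemma w_add: "x \<in> C1 \<Longrightarrow> y \<in> C1 \<Longrightarrow> w (x + y) = w x + w y"
  by (simp add: w_def sig_add proj_add)

lemma w_zero: "w 0 = 0" by (simp add: w_def sig_zero proj_def fun_eq_iff)

lemma sig_split:
  assumes "s \<in> lab {..<L}" "proj I s = 0" "proj Ib s = 0" shows "s = 0"
proof
  fix i show "s i = 0 i"
  proof (cases "i \<in> I")
    case True then show ?thesis using fun_cong[OF assms(2), of i] by (simp add: proj_def)
  next
    case False
    show ?thesis
    proof (cases "i < L")
      case True then show ?thesis using False fun_cong[OF assms(3), of i] by (simp add: proj_def)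
    next
      case F2: False then show ?thesis using assms(1) by (simp add: lab_def)
    qed
  qed
qed

lemma lab_Jb_of: "(x::nat \<Rightarrow> 'a) \<in> lab {..<n} \<Longrightarrow> proj J x = 0 \<Longrightarrow> x \<in> lab Jb"
  unfolding lab_def
proof (intro CollectI allI impI)
  fix i assume x: "x \<in> {v. \<forall>i. i \<notin> {..<n} \<longrightarrow> v i = 0}" and p: "proj J x = 0" and i: "i \<notin> Jb"
  show "x i = 0"
  proof (cases "i \<in> J")
    case True then show ?thesis using fun_cong[OF p, of i] by (simp add: proj_def)
  next
    case False then show ?thesis using x i by auto
  qed
qed

lemma trace1: "density I \<rho> \<Longrightarrow> (\<Sum>u\<in>lab I. \<rho> u u) = 1" unfolding density_def by blast

lemma cnt_const:
  assumes B: condB and u: "u \<in> lab I"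
  shows "cnt b u = cnt b 0"
proof -
  obtain z where z: "z \<in> C1" "w z = u" using w_surj[OF u] by blast
  have "proj J z \<in> proj J ` C0" using B z(1) unfolding condB_def by blast
  then obtain z0 where z0: "z0 \<in> C1" "w z0 = 0" "proj J z0 = proj J z" by (auto simp: C0_def)
  define e where "e = z - z0"
  have eC: "e \<in> C1" using z z0 diff_C1 by (simp add: e_def)
  have we: "w e = u" using w_diff[OF z(1) z0(1)] z z0 by (simp add: e_def)
  have "proj J e = 0" using z0(3) by (simp add: e_def proj_diff)
  then have eJb: "e \<in> lab Jb" using eC C1n lab_Jb_of by blast
  have "bij_betw (\<lambda>c. c + e) {c \<in> lab Jb. b + c \<in> C1 \<and> w (b + c) = 0} {c \<in> lab Jb. b + c \<in> C1 \<and> w (b + c) = u}"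
  proof (rule bij_betwI[where g = "\<lambda>c. c - e"])
    show "(\<lambda>c. c + e) \<in> {c \<in> lab Jb. b + c \<in> C1 \<and> w (b + c) = 0} \<rightarrow> {c \<in> lab Jb. b + c \<in> C1 \<and> w (b + c) = u}"
    proof
      fix c assume c: "c \<in> {c \<in> lab Jb. b + c \<in> C1 \<and> w (b + c) = 0}"
      have eq: "b + (c + e) = (b + c) + e" by (simp add: add.assoc)
      have "(b + c) + e \<in> C1" using c eC add_C1 by blast
      moreover have "w ((b + c) + e) = u" using w_add[of "b + c" e] c eC we by simp
      moreover have "c + e \<in> lab Jb" using c eJb lab_add by blast
      ultimately show "c + e \<in> {c \<in> lab Jb. b + c \<in> C1 \<and> w (b + c) = u}" by (simp only: eq mem_Collect_eq)
    qed
    show "(\<lambda>c. c - e) \<in> {c \<in> lab Jb. b + c \<in> C1 \<and> w (b + c) = u} \<rightarrow> {c \<in> lab Jb. b + c \<in> C1 \<and> w (b + c) = 0}"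
    proof
      fix c assume c: "c \<in> {c \<in> lab Jb. b + c \<in> C1 \<and> w (b + c) = u}"
      have eq: "b + (c - e) = (b + c) - e" by (simp add: algebra_simps)
      have "(b + c) - e \<in> C1" using c eC diff_C1 by blast
      moreover have "w ((b + c) - e) = 0" using w_diff[of "b + c" e] c eC we by simp
      moreover have "c - e \<in> lab Jb" using c eJb lab_diff by blast
      ultimately show "c - e \<in> {c \<in> lab Jb. b + c \<in> C1 \<and> w (b + c) = 0}" by (simp only: eq mem_Collect_eq)
    qed
  qed auto
  then show ?thesis unfolding cnt_def by (simp add: bij_betw_same_card)
qed

lemma suff:
  assumes A: condA and B: condB and rho: "density I \<rho>" and a: "a \<in> lab J" and b: "b \<in> lab J"
  shows "ptrace n J (encode L C2 f (secret_state L I \<rho>)) a b =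
    kap * (if a - b \<in> C1 \<and> sig (a - b) = 0 then of_nat (cnt b 0) else 0)"
proof -
  define Q where "Q \<longleftrightarrow> a - b \<in> C1 \<and> sig (a - b) = 0"
  have pc: "(if Pc a b c then \<rho> (w (a + c)) (w (b + c)) else 0) =
      (if Q then (if b + c \<in> C1 then \<rho> (w (b + c)) (w (b + c)) else 0) else 0)" if c: "c \<in> lab Jb" for c
  proof (cases "Pc a b c")
    case True
    then have x: "a + c \<in> C1" and y: "b + c \<in> C1" and ib: "proj Ib (sig (a + c)) = proj Ib (sig (b + c))"
      by (auto simp: Pc_def)
    have deq: "(a + c) - (b + c) = a - b" by simp
    have dC: "a - b \<in> C1" using diff_C1[OF x y] deq by simp
    have sd: "sig (a - b) = sig (a + c) - sig (b + c)" using sig_diff[OF x y] deq by simp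
    have "proj Ib (sig (a - b)) = 0" using ib by (simp add: sd proj_diff)
    moreover have "proj Jb (a - b) = 0" using a b by (auto simp: proj_def lab_def fun_eq_iff)
    ultimately have "proj I (sig (a - b)) = 0" using A dC unfolding condA_def by blast
    then have s0: "sig (a - b) = 0" using sig_split sig[OF dC] \<open>proj Ib (sig (a - b)) = 0\<close> by blast
    have "w (a + c) - w (b + c) = w (a - b)" using w_diff[OF x y] deq by simp
    also have "\<dots> = 0" using s0 w_zero sig_zero by (simp add: w_def)
    finally have "w (a + c) = w (b + c)" by simp
    then show ?thesis using True dC s0 y by (simp add: Q_def)
  next
    case False
    have "\<not> (Q \<and> b + c \<in> C1)"
    proof
      assume q: "Q \<and> b + c \<in> C1"
      then have dC: "a - b \<in> C1" and s0: "sig (a - b) = 0" and y: "b + c \<in> C1" by (auto simp: Q_def)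
      have eq: "a + c = (a - b) + (b + c)" by simp
      have "a + c \<in> C1" by (subst eq) (rule add_C1[OF dC y])
      moreover have "sig (a + c) = sig (a - b) + sig (b + c)" by (subst eq) (rule sig_add[OF dC y])
      then have "sig (a + c) = sig (b + c)" using s0 by simp
      ultimately have "Pc a b c" using y by (simp add: Pc_def)
      then show False using False by simp
    qed
    then show ?thesis using False by auto
  qed
  have "ptrace n J (encode L C2 f (secret_state L I \<rho>)) a b =
      kap * (\<Sum>c\<in>lab Jb. if Q then (if b + c \<in> C1 then \<rho> (w (b + c)) (w (b + c)) else 0) else 0)"
    unfolding T_formula using pc by (simp cong: sum.cong)
  also have "\<dots> = kap * (if Q then (\<Sum>c\<in>lab Jb. if b + c \<in> C1 then \<rho> (w (b + c)) (w (b + c)) else 0) else 0)"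
    by (cases Q) simp_all
  also have "\<dots> = kap * (if Q then (\<Sum>u\<in>lab I. of_nat (cnt b u) * \<rho> u u) else 0)"
    unfolding sum_diag ..
  also have "(\<Sum>u\<in>lab I. of_nat (cnt b u) * \<rho> u u) = (\<Sum>u\<in>lab I. of_nat (cnt b 0) * \<rho> u u)"
    using cnt_const[OF B] by (simp cong: sum.cong)
  also have "\<dots> = of_nat (cnt b 0)"
    using trace1[OF rho] by (simp add: sum_distrib_left[symmetric])
  finally show ?thesis by (simp add: Q_def)
qed

lemma suff_secure: "condA \<Longrightarrow> condB \<Longrightarrow> strongly_secure n L C2 f I J"
  unfolding strongly_secure_def using suff by simp

end

context qss begin

lemma secureD:
  "strongly_secure n L C2 f I J \<Longrightarrow> density I \<rho> \<Longrightarrow> density I \<rho>' \<Longrightarrow> a \<in> lab J \<Longrightarrow> b \<in> lab J \<Longrightarrow>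
   ptrace n J (encode L C2 f (secret_state L I \<rho>)) a b = ptrace n J (encode L C2 f (secret_state L I \<rho>')) a b"
  unfolding strongly_secure_def by blast

definition E :: "(nat \<Rightarrow> 'a) \<Rightarrow> (nat \<Rightarrow> 'a) \<Rightarrow> real" where "E u p = (if p = u then 1 else 0)"

lemma dens_E: "u \<in> lab I \<Longrightarrow> density I (\<lambda>a b. complex_of_real (E u a * E u b))"
proof (rule density_rank1)
  show "finite I" using IL finite_subset by blast
  assume u: "u \<in> lab I"
  have "(\<Sum>a\<in>lab I. E u a * E u a) = (\<Sum>a\<in>lab I. if a = u then 1 else 0)"
    by (rule sum.cong) (auto simp: E_def)
  also have "\<dots> = 1" using u fin_I by simp
  finally show "(\<Sum>a\<in>lab I. E u a * E u a) = 1" .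
qed

lemma T_E: "u \<in> lab I \<Longrightarrow>
  ptrace n J (encode L C2 f (secret_state L I (\<lambda>a b. complex_of_real (E u a * E u b)))) b b = kap * of_nat (cnt b u)"
proof -
  assume u: "u \<in> lab I"
  have "(\<Sum>v\<in>lab I. of_nat (cnt b v) * complex_of_real (E u v * E u v))
      = (\<Sum>v\<in>lab I. if v = u then of_nat (cnt b v) else 0)"
    by (rule sum.cong) (auto simp: E_def)
  also have "\<dots> = of_nat (cnt b u)" using u fin_I by simp
  finally show ?thesis unfolding T_diag by simp
qed

lemma necB: assumes S: "strongly_secure n L C2 f I J" shows condB
  unfolding condB_def
proof
  fix y assume "y \<in> proj J ` C1"
  then obtain z where z: "z \<in> C1" "y = proj J z" by blast
  show "y \<in> proj J ` C0"
  proof (rule ccontr)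
    assume nz: "y \<notin> proj J ` C0"
    define b where "b = proj J z"
    have bJ: "b \<in> lab J" by (simp add: b_def proj_lab)
    have u: "w z \<in> lab I" by (rule w_lab)
    have z0: "(0::nat \<Rightarrow> 'a) \<in> lab I" by (rule lab_zero)
    have "ptrace n J (encode L C2 f (secret_state L I (\<lambda>a b. complex_of_real (E (w z) a * E (w z) b)))) b b
        = ptrace n J (encode L C2 f (secret_state L I (\<lambda>a b. complex_of_real (E 0 a * E 0 b)))) b b"
      by (rule secureD[OF S dens_E[OF u] dens_E[OF z0] bJ bJ])
    then have "kap * of_nat (cnt b (w z)) = kap * of_nat (cnt b 0)" by (simp only: T_E[OF u] T_E[OF z0])
    then have ceq: "cnt b (w z) = cnt b 0" using kap_nz by simp
    have "{c \<in> lab Jb. b + c \<in> C1 \<and> w (b + c) = 0} = {}"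
    proof (rule ccontr)
      assume "{c \<in> lab Jb. b + c \<in> C1 \<and> w (b + c) = 0} \<noteq> {}"
      then obtain c where c: "c \<in> lab Jb" "b + c \<in> C1" "w (b + c) = 0" by blast
      have "proj J (b + c) = b" using c(1) bJ by (auto simp: proj_def lab_def fun_eq_iff)
      moreover have "b + c \<in> C0" using c by (simp add: C0_def)
      ultimately have "b \<in> proj J ` C0" by (metis image_eqI)
      then have "y \<in> proj J ` C0" using z by (simp add: b_def)
      then show False using nz by simp
    qed
    then have c0: "cnt b 0 = 0" unfolding cnt_def by (metis card.empty)
    have zc: "z - b \<in> {c \<in> lab Jb. b + c \<in> C1 \<and> w (b + c) = w z}"
    proof -
      have "z \<in> lab {..<n}" using z C1n by blast
      then have "z - b \<in> lab Jb" by (auto simp: b_def lab_def proj_def)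
      then show ?thesis using z by simp
    qed
    have "cnt b (w z) > 0" unfolding cnt_def using zc fin_Jb
      by (metis (no_types, lifting) card_gt_0_iff empty_iff finite_subset mem_Collect_eq subsetI)
    then show False using ceq c0 by simp
  qed
qed

end

context qss begin

lemma necA: assumes S: "strongly_secure n L C2 f I J" shows condA
  unfolding condA_def
proof (intro ballI impI, rule ccontr)
  fix d assume dC: "d \<in> C1" and h: "proj Jb d = 0 \<and> proj Ib (sig d) = 0" and nz: "proj I (sig d) \<noteq> 0"
  define u0 where "u0 = w d"
  have u0nz: "u0 \<noteq> 0" using nz by (simp add: u0_def w_def)
  have u0I: "u0 \<in> lab I" by (simp add: u0_def w_lab)
  have zI: "(0::nat \<Rightarrow> 'a) \<in> lab I" by (rule lab_zero)
  define r :: real where "r = sqrt (1/2)"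
  have rr: "r * r = 1/2" by (simp add: r_def)
  define vp where "vp p = r * (E u0 p + E 0 p)" for p
  define vm where "vm p = r * (E u0 p - E 0 p)" for p
  have sq: "(E u0 p + E 0 p) * (E u0 p + E 0 p) = E u0 p + E 0 p"
     "(E u0 p - E 0 p) * (E u0 p - E 0 p) = E u0 p + E 0 p" for p
    using u0nz by (auto simp: E_def)
  have sumE2: "(\<Sum>a\<in>lab I. E u0 a + E 0 a) = 2"
  proof -
    have "(\<Sum>a\<in>lab I. E u0 a + E 0 a) = (\<Sum>a\<in>lab I. E u0 a) + (\<Sum>a\<in>lab I. E 0 a)"
      by (rule sum.distrib)
    also have "(\<Sum>a\<in>lab I. E u0 a) = 1" using u0I fin_I by (simp add: E_def)
    also have "(\<Sum>a\<in>lab I. E 0 a) = 1" using zI fin_I by (simp add: E_def)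
    finally show ?thesis by (simp add: zero_fun_def)
  qed
  have fI: "finite I" using IL finite_subset by blast
  have dp: "density I (\<lambda>a b. complex_of_real (vp a * vp b))"
  proof (rule density_rank1[OF fI])
    have "(\<Sum>a\<in>lab I. vp a * vp a) = (\<Sum>a\<in>lab I. (r * r) * (E u0 a + E 0 a))"
      by (rule sum.cong[OF refl]) (subst sq(1)[symmetric], simp add: vp_def algebra_simps)
    also have "\<dots> = 1" using sumE2 rr by (simp add: sum_distrib_left[symmetric])
    finally show "(\<Sum>a\<in>lab I. vp a * vp a) = 1" .
  qed
  have dm: "density I (\<lambda>a b. complex_of_real (vm a * vm b))"
  proof (rule density_rank1[OF fI])
    have "(\<Sum>a\<in>lab I. vm a * vm a) = (\<Sum>a\<in>lab I. (r * r) * (E u0 a + E 0 a))"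
      by (rule sum.cong[OF refl]) (subst sq(2)[symmetric], simp add: vm_def algebra_simps)
    also have "\<dots> = 1" using sumE2 rr by (simp add: sum_distrib_left[symmetric])
    finally show "(\<Sum>a\<in>lab I. vm a * vm a) = 1" .
  qed
  have dJ: "d \<in> lab J"
  proof -
    have "d \<in> lab {..<n}" using dC C1n by blast
    moreover have "\<And>i. i < n \<Longrightarrow> i \<notin> J \<Longrightarrow> d i = 0"
      using fun_cong[OF conjunct1[OF h]] by (simp add: proj_def) (metis lessThan_iff DiffI)
    ultimately show ?thesis unfolding lab_def
    proof (intro CollectI allI impI)
      fix i assume d1: "d \<in> {v. \<forall>i. i \<notin> {..<n} \<longrightarrow> v i = 0}" and d2: "\<And>i. i < n \<Longrightarrow> i \<notin> J \<Longrightarrow> d i = 0"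
        and i: "i \<notin> J"
      show "d i = 0"
      proof (cases "i < n")
        case True then show ?thesis using d2 i by blast
      next
        case False then show ?thesis using d1 by simp
      qed
    qed
  qed
  have zJ: "(0::nat \<Rightarrow> 'a) \<in> lab J" by (rule lab_zero)
  define g where "g v c = (if Pc d 0 c then v (w (d + c)) * v (w (0 + c)) else 0)" for v :: "(nat \<Rightarrow> 'a) \<Rightarrow> real" and c
  have Tv: "ptrace n J (encode L C2 f (secret_state L I (\<lambda>a b. complex_of_real (v a * v b)))) d 0
      = kap * complex_of_real (\<Sum>c\<in>lab Jb. g v c)" for v
    unfolding T_formula of_real_sum g_def by (intro arg_cong[where f = "(*) kap"] sum.cong refl) simp
  have "kap * complex_of_real (\<Sum>c\<in>lab Jb. g vp c) = kap * complex_of_real (\<Sum>c\<in>lab Jb. g vm c)"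
    using secureD[OF S dp dm dJ zJ] unfolding Tv .
  then have "complex_of_real (\<Sum>c\<in>lab Jb. g vp c) = complex_of_real (\<Sum>c\<in>lab Jb. g vm c)"
    using kap_nz by (metis mult_cancel_left)
  then have eqs: "(\<Sum>c\<in>lab Jb. g vp c) = (\<Sum>c\<in>lab Jb. g vm c)" by (simp only: of_real_eq_iff)
  define h where "h c = g vp c - g vm c" for c
  have hs: "(\<Sum>c\<in>lab Jb. h c) = 0" using eqs by (simp add: h_def sum_subtractf)
  have hform: "h c = (if Pc d 0 c then 2 * (r * r) * (E u0 (w (d + c)) * E 0 (w c) + E 0 (w (d + c)) * E u0 (w c)) else 0)" for c
    by (simp add: h_def g_def vp_def vm_def algebra_simps)
  have hnn: "0 \<le> h c" for c
    unfolding hform by (simp add: E_def)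
  have P0: "Pc d 0 0" using dC zero_C1 h by (simp add: Pc_def sig_zero proj_def fun_eq_iff)
  have "h 0 = 2 * (r * r) * (E u0 (w d) * E 0 (w 0) + E 0 (w d) * E u0 (w 0))"
    using P0 by (simp add: hform)
  also have "\<dots> \<ge> 1" using rr w_zero u0nz by (simp add: E_def u0_def)
  finally have h0: "1 \<le> h 0" .
  have "h 0 \<le> (\<Sum>c\<in>lab Jb. h c)"
    by (rule member_le_sum[OF lab_zero]) (simp_all add: hnn fin_Jb)
  then show False using hs h0 by simp
qed

theorem secure_iff: "strongly_secure n L C2 f I J \<longleftrightarrow> condA \<and> condB"
  using necA necB suff_secure by blast

end

context qss begin

definition ext :: "(nat \<Rightarrow> 'a) \<Rightarrow> (nat \<Rightarrow> 'a)" where "ext x = ext_vec n Ib x (sig x)"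

abbreviation "KK \<equiv> Jb \<union> (+) n ` Ib"

lemma C1'_eq: "C1' n L I f = ext ` C1"
proof
  show "C1' n L I f \<subseteq> ext ` C1"
  proof
    fix v assume "v \<in> C1' n L I f"
    then obtain s x where v: "v = ext_vec n Ib x s" "s \<in> lab {..<L}" "x \<in> f s" by (auto simp: C1'_def)
    then have "x \<in> C1" "sig x = s" using fs_C1 sig_eq by auto
    then show "v \<in> ext ` C1" using v by (auto simp: ext_def)
  qed
next
  show "ext ` C1 \<subseteq> C1' n L I f"
  proof
    fix v assume "v \<in> ext ` C1"
    then obtain x where x: "x \<in> C1" "v = ext x" by blast
    then show "v \<in> C1' n L I f" using sig[OF x(1)] unfolding C1'_def ext_def by blast
  qed
qed

lemma C2'_eq: "C2' n L I f = ext ` C0"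
proof
  show "C2' n L I f \<subseteq> ext ` C0"
  proof
    fix v assume "v \<in> C2' n L I f"
    then obtain s x where v: "v = ext_vec n Ib x s" "s \<in> lab {..<L}" "x \<in> f s" "proj I s = 0"
      by (auto simp: C2'_def)
    then have "x \<in> C1" "sig x = s" using fs_C1 sig_eq by auto
    then have "x \<in> C0" using v(4) by (simp add: C0_def w_def)
    then show "v \<in> ext ` C0" using v \<open>sig x = s\<close> by (auto simp: ext_def)
  qed
next
  show "ext ` C0 \<subseteq> C2' n L I f"
  proof
    fix v assume "v \<in> ext ` C0"
    then obtain x where x: "x \<in> C1" "w x = 0" "v = ext x" by (auto simp: C0_def)
    then show "v \<in> C2' n L I f" using sig[OF x(1)] unfolding C2'_def ext_def w_def by blast
  qed
qed

lemma ext_add: "x \<in> C1 \<Longrightarrow> y \<in> C1 \<Longrightarrow> ext (x + y) = ext x + ext y"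
  by (simp add: ext_def sig_add ext_vec_def fun_eq_iff)

lemma ext_scale: assumes "x \<in> C1" shows "ext (fscale c x) = fscale c (ext x)"
  unfolding ext_def sig_scale[OF assms] by (simp add: ext_vec_def fun_eq_iff fscale_def)

lemma C0_sub: "C0 \<subseteq> C1" by (auto simp: C0_def)

lemma sub0: "fvec.subspace C0"
proof (rule fvec.subspaceI)
  show "0 \<in> C0" by (simp add: C0_def zero_C1 w_zero)
next
  fix x y assume "x \<in> C0" "y \<in> C0"
  then show "x + y \<in> C0" by (simp add: C0_def add_C1 w_add)
next
  fix c x assume x: "x \<in> C0"
  show "fscale c x \<in> C0"
  proof -
    from x have xC: "x \<in> C1" and "w x = 0" by (auto simp: C0_def)
    have "w (fscale c x) = fscale c (w x)" unfolding w_def sig_scale[OF xC] by (rule proj_scale)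
    then have "w (fscale c x) = 0" using \<open>w x = 0\<close> by (simp add: fscale_def fun_eq_iff)
    then show ?thesis using scale_C1[OF xC] by (simp add: C0_def)
  qed
qed

lemma fin_C0: "finite C0" using C0_sub fin_C1 finite_subset by auto

lemma q2: "card (UNIV :: 'a set) > 1"
proof -
  have "{0, 1} \<subseteq> (UNIV :: 'a set)" by simp
  then have "card {0, 1::'a} \<le> card (UNIV :: 'a set)" by (rule card_mono[OF finite_UNIV])
  then show ?thesis by simp
qed

lemma subspace_img:
  assumes S: "fvec.subspace S" "S \<subseteq> C1"
    and hadd: "\<And>x y. h (x + y) = h x + h y" and hsc: "\<And>c x. h (fscale c x) = fscale c (h x)"
  shows "fvec.subspace ((\<lambda>x. h (ext x)) ` S)"
proof (rule subspace_image[OF S(1)])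
  fix x y assume "x \<in> S" "y \<in> S"
  then have "x \<in> C1" "y \<in> C1" using S(2) by auto
  then show "h (ext (x + y)) = h (ext x) + h (ext y)" by (simp add: ext_add hadd)
next
  fix c x assume "x \<in> S"
  then have "x \<in> C1" using S(2) by auto
  then show "h (ext (fscale c x)) = fscale c (h (ext x))" by (simp add: ext_scale hsc)
qed

lemma card_dim_img:
  assumes S: "fvec.subspace S" "S \<subseteq> C1"
    and hadd: "\<And>x y. h (x + y) = h x + h y" and hsc: "\<And>c x. h (fscale c x) = fscale c (h x)"
  shows "card ((\<lambda>x. h (ext x)) ` S) = card (UNIV :: 'a set) ^ fvec.dim ((\<lambda>x. h (ext x)) ` S)"
  by (rule card_subspace[OF subspace_img[OF S hadd hsc]])
     (use S(2) fin_C1 finite_subset in blast)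

lemma projJ_ext: "proj J (ext x) = proj J x"
  using Jn by (auto simp: proj_def ext_def ext_vec_def fun_eq_iff)

lemma cond1_iff:
  "int (fvec.dim (proj_code J (C1' n L I f))) - int (fvec.dim (proj_code J (C2' n L I f))) = 0 \<longleftrightarrow> condB"
proof -
  have e1: "proj_code J (C1' n L I f) = (\<lambda>x. proj J (ext x)) ` C1" unfolding proj_code_def C1'_eq by (simp add: image_image)
  have e2: "proj_code J (C2' n L I f) = (\<lambda>x. proj J (ext x)) ` C0" unfolding proj_code_def C2'_eq by (simp add: image_image)
  have ad: "\<And>x y :: nat \<Rightarrow> 'a. proj J (x + y) = proj J x + proj J y" by (rule proj_add)
  have sc: "\<And>c (x :: nat \<Rightarrow> 'a). proj J (fscale c x) = fscale c (proj J x)" by (rule proj_scale)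
  note c1 = card_dim_img[OF sub1 order_refl ad sc] and c0 = card_dim_img[OF sub0 C0_sub ad sc]
  have i1: "(\<lambda>x. proj J (ext x)) ` C1 = proj J ` C1" and i0: "(\<lambda>x. proj J (ext x)) ` C0 = proj J ` C0"
    by (simp_all add: projJ_ext)
  have "int (fvec.dim (proj_code J (C1' n L I f))) - int (fvec.dim (proj_code J (C2' n L I f))) = 0
      \<longleftrightarrow> fvec.dim ((\<lambda>x. proj J (ext x)) ` C1) = fvec.dim ((\<lambda>x. proj J (ext x)) ` C0)"
    unfolding e1 e2 by simp
  also have "\<dots> \<longleftrightarrow> card ((\<lambda>x. proj J (ext x)) ` C1) = card ((\<lambda>x. proj J (ext x)) ` C0)"
    unfolding c1 c0 using q2 by (simp add: power_inject_exp)
  also have "\<dots> \<longleftrightarrow> proj J ` C1 = proj J ` C0"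
    unfolding i1 i0
  proof
    assume "card (proj J ` C1) = card (proj J ` C0)"
    moreover have "proj J ` C0 \<subseteq> proj J ` C1" using C0_sub by auto
    ultimately show "proj J ` C1 = proj J ` C0" using fin_C1 by (metis card_subset_eq finite_imageI)
  qed simp
  also have "\<dots> \<longleftrightarrow> condB" unfolding condB_def using C0_sub by auto
  finally show ?thesis .
qed

end

context qss begin

definition gK :: "(nat \<Rightarrow> 'a) \<Rightarrow> (nat \<Rightarrow> 'a)" where "gK x = proj KK (ext x)"

lemma gK_zero: "gK x = 0 \<longleftrightarrow> proj Jb x = 0 \<and> proj Ib (sig x) = 0"
proof
  assume g: "gK x = 0"
  have a: "x k = 0" if "k \<in> Jb" for k
  proof -
    have kk: "k \<in> KK" "k < n" using that by auto
    have "gK x k = ext x k" using kk(1) by (simp add: gK_def proj_def)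
    also have "\<dots> = x k" using kk(2) by (simp add: ext_def ext_vec_def)
    finally show ?thesis using g by simp
  qed
  have b: "sig x i = 0" if "i \<in> Ib" for i
  proof -
    have kk: "n + i \<in> KK" using that by blast
    have "gK x (n + i) = ext x (n + i)" using kk by (simp add: gK_def proj_def)
    also have "\<dots> = sig x i" using that by (simp add: ext_def ext_vec_def)
    finally show ?thesis using g by simp
  qed
  show "proj Jb x = 0 \<and> proj Ib (sig x) = 0"
    using a b by (auto simp: proj_def fun_eq_iff)
next
  assume h: "proj Jb x = 0 \<and> proj Ib (sig x) = 0"
  show "gK x = 0"
  proof
    fix k show "gK x k = 0 k"
    proof (cases "k \<in> KK")
      case False then show ?thesis by (auto simp: gK_def proj_def)
    next
      case True
      show ?thesis
      proof (cases "k < n")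
        case lt: True
        then have "k \<in> Jb" using True by auto
        then have "x k = 0" using fun_cong[OF conjunct1[OF h], of k] by (simp add: proj_def)
        then show ?thesis using True lt by (simp add: gK_def proj_def ext_def ext_vec_def)
      next
        case ge: False
        then have "k - n \<in> Ib" using True by auto
        then have "sig x (k - n) = 0" using fun_cong[OF conjunct2[OF h], of "k - n"] by (simp add: proj_def)
        then show ?thesis using True ge \<open>k - n \<in> Ib\<close> by (simp add: gK_def proj_def ext_def ext_vec_def)
      qed
    qed
  qed
qed

lemma ext_diff: "x \<in> C1 \<Longrightarrow> y \<in> C1 \<Longrightarrow> ext (x - y) = ext x - ext y"
  by (simp add: ext_def sig_diff ext_vec_def fun_eq_iff)

lemma gK_diff: "x \<in> C1 \<Longrightarrow> y \<in> C1 \<Longrightarrow> gK (x - y) = gK x - gK y"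
  by (simp add: gK_def ext_diff proj_diff)

lemma condA_iff_K: "condA \<longleftrightarrow> {x \<in> C1. gK x = 0} = {x \<in> C0. gK x = 0}"
  unfolding condA_def gK_zero C0_def w_def by auto

lemma cardC1: "card C1 = card (UNIV :: 'a set) ^ card I * card C0"
proof -
  have "card C1 = card (w ` C1) * card {x \<in> C1. w x = 0}"
    by (rule card_kernel[OF fin_C1]) (simp_all add: diff_C1 add_C1 w_diff)
  moreover have "w ` C1 = lab I" using w_lab w_surj by blast
  moreover have "card (lab I :: (nat \<Rightarrow> 'a) set) = card (UNIV :: 'a set) ^ card I"
    by (rule card_lab) (use IL finite_subset in blast)
  ultimately show ?thesis by (simp add: C0_def)
qed

lemma cond2_iff:
  "int (fvec.dim (proj_code KK (C1' n L I f))) - int (fvec.dim (proj_code KK (C2' n L I f)))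
     = int (card I) \<longleftrightarrow> condA"
proof -
  have e1: "proj_code KK (C1' n L I f) = (\<lambda>x. proj KK (ext x)) ` C1" unfolding proj_code_def C1'_eq by (simp add: image_image)
  have e2: "proj_code KK (C2' n L I f) = (\<lambda>x. proj KK (ext x)) ` C0" unfolding proj_code_def C2'_eq by (simp add: image_image)
  have ad: "\<And>x y :: nat \<Rightarrow> 'a. proj KK (x + y) = proj KK x + proj KK y" by (rule proj_add)
  have sc: "\<And>c (x :: nat \<Rightarrow> 'a). proj KK (fscale c x) = fscale c (proj KK x)" by (rule proj_scale)
  note c1 = card_dim_img[OF sub1 order_refl ad sc] and c0 = card_dim_img[OF sub0 C0_sub ad sc]
  have g: "(\<lambda>x. proj KK (ext x)) = gK" by (simp add: gK_def fun_eq_iff)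
  define X where "X = card (gK ` C1)"
  define Y where "Y = card (gK ` C0)"
  define k1 where "k1 = card {x \<in> C1. gK x = 0}"
  define k0 where "k0 = card {x \<in> C0. gK x = 0}"
  define Q where "Q = card (UNIV :: 'a set) ^ card I"
  have h1: "card C1 = X * k1" unfolding X_def k1_def by (rule card_kernel[OF fin_C1]) (simp_all add: diff_C1 add_C1 gK_diff)
  have cl0: "x - y \<in> C0" "x + y \<in> C0" if "x \<in> C0" "y \<in> C0" for x y
    using that sub0 by (simp_all add: fvec.subspace_diff fvec.subspace_add)
  have h0: "card C0 = Y * k0" unfolding Y_def k0_def
  proof (rule card_kernel[OF fin_C0])
    fix x y assume "x \<in> C0" "y \<in> C0"
    then show "x - y \<in> C0" "x + y \<in> C0" using cl0 by auto
    from \<open>x \<in> C0\<close> \<open>y \<in> C0\<close> have "x \<in> C1" "y \<in> C1" using C0_sub by auto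
    then show "gK (x - y) = gK x - gK y" by (rule gK_diff)
  qed
  have hq: "X * k1 = Q * (Y * k0)" using cardC1 h1 h0 by (simp add: Q_def)
  have pz: "\<And>K. proj K (0::nat\<Rightarrow>'a) = 0" by (simp add: proj_def fun_eq_iff)
  have "gK 0 = 0" unfolding gK_zero sig_zero pz by simp
  then have z0: "(0::nat\<Rightarrow>'a) \<in> {x \<in> C0. gK x = 0}" using sub0 by (simp add: fvec.subspace_0)
  have fk0: "finite {x \<in> C0. gK x = 0}" using fin_C0 by simp
  have fk1: "finite {x \<in> C1. gK x = 0}" using fin_C1 by simp
  have k0p: "k0 > 0" unfolding k0_def using z0 fk0 card_gt_0_iff by blast
  have "0 \<in> C0" using sub0 by (simp add: fvec.subspace_0)
  then have Yp: "Y > 0" unfolding Y_def using fin_C0 by (auto simp: card_gt_0_iff)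
  have Qp: "Q > 0" unfolding Q_def using q2 by simp
  have sub: "{x \<in> C0. gK x = 0} \<subseteq> {x \<in> C1. gK x = 0}" using C0_sub by auto
  have "int (fvec.dim (proj_code KK (C1' n L I f))) - int (fvec.dim (proj_code KK (C2' n L I f)))
     = int (card I) \<longleftrightarrow> fvec.dim (gK ` C1) = fvec.dim (gK ` C0) + card I"
    unfolding e1 e2 g by linarith
  also have "\<dots> \<longleftrightarrow> X = Y * Q"
  proof -
    have "card (UNIV::'a set) ^ fvec.dim (gK ` C0) * card (UNIV::'a set) ^ card I
        = card (UNIV::'a set) ^ (fvec.dim (gK ` C0) + card I)" by (simp add: power_add)
    then show ?thesis using c1 c0 q2 unfolding g X_def Y_def Q_def by (simp only: power_inject_exp)
  qed
  also have "\<dots> \<longleftrightarrow> k1 = k0"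
  proof
    assume xq: "X = Y * Q"
    have e: "Q * (Y * k0) = (Y * Q) * k0" by (simp only: mult.commute mult.left_commute mult.assoc)
    have "(Y * Q) * k1 = (Y * Q) * k0" using hq unfolding xq e .
    moreover have "Y * Q \<noteq> 0" using Yp Qp by simp
    ultimately show "k1 = k0" using mult_left_cancel by blast
  next
    assume kq: "k1 = k0"
    have e: "Q * (Y * k0) = (Y * Q) * k0" by (simp only: mult.commute mult.left_commute mult.assoc)
    have "X * k0 = (Y * Q) * k0" using hq unfolding kq e .
    moreover have "k0 \<noteq> 0" using k0p by simp
    ultimately show "X = Y * Q" using mult_right_cancel by blast
  qed
  also have "\<dots> \<longleftrightarrow> {x \<in> C1. gK x = 0} = {x \<in> C0. gK x = 0}"
  proof
    assume "k1 = k0"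
    then have "card {x \<in> C0. gK x = 0} = card {x \<in> C1. gK x = 0}" unfolding k1_def k0_def by (rule sym)
    then show "{x \<in> C1. gK x = 0} = {x \<in> C0. gK x = 0}" by (rule sym[OF card_subset_eq[OF fk1 sub]])
  next
    assume "{x \<in> C1. gK x = 0} = {x \<in> C0. gK x = 0}"
    then show "k1 = k0" unfolding k1_def k0_def by (rule arg_cong[where f = card])
  qed
  also have "\<dots> \<longleftrightarrow> condA" by (rule condA_iff_K[symmetric])
  finally show ?thesis .
qed

lemma main:
  "strongly_secure n L C2 f I J \<longleftrightarrow>
     int (fvec.dim (proj_code J (C1' n L I f))) - int (fvec.dim (proj_code J (C2' n L I f))) = 0 \<and>
     int (fvec.dim (proj_code (({..<n} - J) \<union> ((+) n ` ({..<L} - I))) (C1' n L I f)))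
       - int (fvec.dim (proj_code (({..<n} - J) \<union> ((+) n ` ({..<L} - I))) (C2' n L I f)))
       = int (card I)"
  using secure_iff cond1_iff cond2_iff by blast

end

theorem proposition1:
  fixes C1 C2 :: "(nat \<Rightarrow> 'a::{finite,field}) set"
    and f :: "(nat \<Rightarrow> 'a) \<Rightarrow> (nat \<Rightarrow> 'a) set"
    and n L :: nat and I J :: "nat set"
  assumes "C1 \<subseteq> lab {..<n}" "fvec.subspace C1" "fvec.subspace C2"
    and "C2 \<subset> C1"
    and "fvec.dim C1 - fvec.dim C2 = L"
    and "quotient_iso L C1 C2 f"
    and "I \<subseteq> {..<L}" and "J \<subseteq> {..<n}"
  shows "strongly_secure n L C2 f I J \<longleftrightarrow>
     int (fvec.dim (proj_code J (C1' n L I f))) - int (fvec.dim (proj_code J (C2' n L I f))) = 0 \<and>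
     int (fvec.dim (proj_code (({..<n} - J) \<union> ((+) n ` ({..<L} - I))) (C1' n L I f)))
       - int (fvec.dim (proj_code (({..<n} - J) \<union> ((+) n ` ({..<L} - I))) (C2' n L I f)))
       = int (card I)"
proof -
  interpret qss C1 C2 f n L I J
    using assms by (unfold_locales) auto
  show ?thesis by (rule main)
qed

end
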